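(* Let $\mathcal{M}$ be an episodic MDP with rewards in $[0,1]$ and deterministic expert $\pi^{\operatorname{E}}$. Let $\widehat P$ be a (random) transition model, $\widetilde d=(\widetilde d_h)_{h\le H}$ with $\widetilde d_h:\mathcal{S}\times\mathcal{A}\to\mathbb{R}$ a (random) estimator, and $\bar\pi$ a policy. Suppose: (a) with probability at least $1-\delta_{\operatorname{RFE}}$, for every reward function $w=(w_h)$ with $w_h:\mathcal{S}\times\mathcal{A}\to[-1,1]$ and every policy $\pi$, $|V^{\pi,P,w}-V^{\pi,\widehat P,w}|\le\varepsilon_{\operatorname{RFE}}$; (b) with probability at least $1-\delta_{\operatorname{EST}}$, $\sum_{h=1}^H\|\widetilde d_h-d_h^{\pi^{\operatorname{E}}}\|_1\le\varepsilon_{\operatorname{EST}}$; (c) $\sum_{h=1}^H\|\widetilde d_h-d_h^{\bar\pi,\widehat P}\|_1\le\min_{\pi\in\Pi}\sum_{h=1}^H\|\widetilde d_h-d_h^{\pi,\widehat P}\|_1+\varepsilon_{\mathrm{opt}}$. Then with probability at least $1-\delta_{\operatorname{EST}}-\delta_{\operatorname{RFE}}$, $V^{\pi^{\operatorname{E}}}-V^{\bar\pi}\le2\varepsilon_{\operatorname{EST}}+2\varepsilon_{\operatorname{RFE}}+\varepsilon_{\mathrm{opt}}$.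
   Context: Episodic MDP $(\mathcal{S},\mathcal{A},P,r,H,\rho)$, $\mathcal{S},\mathcal{A}$ finite, $r_h:\mathcal{S}\times\mathcal{A}\to[0,1]$, transitions $P_h(\cdot|s,a)$, initial distribution $\rho$. Policies $\pi=(\pi_h)$, $\pi_h:\mathcal{S}\to\Delta(\mathcal{A})$; $\Pi$ all policies. For a transition model $Q=(Q_h)$, $d_h^{\pi,Q}(s,a)$ is the probability of $(s_h,a_h)=(s,a)$ when running $\pi$ from $s_1\sim\rho$ with $s_{h+1}\sim Q_h(\cdot|s_h,a_h)$; $d_h^\pi=d_h^{\pi,P}$. $V^{\pi,Q,w}=\sum_h\sum_{(s,a)}d_h^{\pi,Q}(s,a)w_h(s,a)$ and $V^\pi=V^{\pi,P,r}$. $\|\cdot\|_1$ is the $\ell_1$ norm over $\mathcal{S}\times\mathcal{A}$. *)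

theory Defs
  imports "HOL-Probability.Probability"
begin

text \<open>Steps are indexed h = 1..H. A transition model is Q :: nat => 's => 'a => 's pmf
  (Q h s a = Q_h(.|s,a)); a (Markov, possibly stochastic) policy is
  pol :: nat => 's => 'a pmf; the initial distribution is rho :: 's pmf.
  The set Pi of all policies is the whole type nat => 's => 'a pmf.\<close>

fun occ :: "'s::finite pmf \<Rightarrow> (nat \<Rightarrow> 's \<Rightarrow> 'a::finite \<Rightarrow> 's pmf)
            \<Rightarrow> (nat \<Rightarrow> 's \<Rightarrow> 'a pmf) \<Rightarrow> nat \<Rightarrow> 's \<Rightarrow> 'a \<Rightarrow> real" where
  "occ rho Q pol 0 s a = 0"
| "occ rho Q pol (Suc 0) s a = pmf rho s * pmf (pol 1 s) a"
| "occ rho Q pol (Suc (Suc h)) s a =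
     (\<Sum>s'\<in>UNIV. \<Sum>a'\<in>UNIV. occ rho Q pol (Suc h) s' a' * pmf (Q (Suc h) s' a') s)
       * pmf (pol (Suc (Suc h)) s) a"

text \<open>occ rho Q pol h s a = d_h^{pol,Q}(s,a): probability that (s_h,a_h) = (s,a).\<close>

definition value_fn :: "'s::finite pmf \<Rightarrow> nat \<Rightarrow> (nat \<Rightarrow> 's \<Rightarrow> 'a::finite \<Rightarrow> 's pmf)
     \<Rightarrow> (nat \<Rightarrow> 's \<Rightarrow> 'a pmf) \<Rightarrow> (nat \<Rightarrow> 's \<Rightarrow> 'a \<Rightarrow> real) \<Rightarrow> real" where
  "value_fn rho H Q pol w = (\<Sum>h=1..H. \<Sum>s\<in>UNIV. \<Sum>a\<in>UNIV. occ rho Q pol h s a * w h s a)"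

definition l1dist :: "('s::finite \<Rightarrow> 'a::finite \<Rightarrow> real) \<Rightarrow> ('s \<Rightarrow> 'a \<Rightarrow> real) \<Rightarrow> real" where
  "l1dist x y = (\<Sum>s\<in>UNIV. \<Sum>a\<in>UNIV. \<bar>x s a - y s a\<bar>)"

definition deterministic_policy :: "(nat \<Rightarrow> 's \<Rightarrow> 'a pmf) \<Rightarrow> bool" where
  "deterministic_policy pol \<longleftrightarrow> (\<exists>f. \<forall>h s. pol h s = return_pmf (f h s))"

end

theory Submission
  imports Defs
begin

lemma l1_tri: "l1dist x z \<le> l1dist x y + l1dist y z"
  unfolding l1dist_def
  by (simp only: sum.distrib[symmetric]) (intro sum_mono, simp)

lemma l1_sym: "l1dist x y = l1dist y x"
  unfolding l1dist_def by (simp add: abs_minus_commute)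

lemma l1_nonneg: "0 \<le> l1dist x y"
  unfolding l1dist_def by (intro sum_nonneg) auto

lemma sum_l1_tri: "(\<Sum>h=1..H. l1dist (x h) (z h)) \<le> (\<Sum>h=1..H. l1dist (x h) (y h)) + (\<Sum>h=1..H. l1dist (y h) (z h))"
  by (simp only: sum.distrib[symmetric]) (intro sum_mono l1_tri)

lemma sum_l1_sym: "(\<Sum>h=1..H. l1dist (x h) (y h)) = (\<Sum>h=1..H. l1dist (y h) (x h))"
  using l1_sym by metis

lemma val_diff: "value_fn rho H Q pol w - value_fn rho H Q' pol' w =
   (\<Sum>h=1..H. \<Sum>s\<in>UNIV. \<Sum>a\<in>UNIV. (occ rho Q pol h s a - occ rho Q' pol' h s a) * w h s a)"
  unfolding value_fn_def by (simp add: sum_subtractf left_diff_distrib)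

lemma val_diff_le:
  assumes "\<And>h s a. \<bar>w h s a\<bar> \<le> 1"
  shows "value_fn rho H Q pol w - value_fn rho H Q' pol' w \<le>
    (\<Sum>h=1..H. l1dist (occ rho Q pol h) (occ rho Q' pol' h))"
  unfolding val_diff l1dist_def
proof (intro sum_mono)
  fix h s a
  have "(occ rho Q pol h s a - occ rho Q' pol' h s a) * w h s a
      \<le> \<bar>(occ rho Q pol h s a - occ rho Q' pol' h s a) * w h s a\<bar>" by simp
  also have "\<dots> \<le> \<bar>occ rho Q pol h s a - occ rho Q' pol' h s a\<bar>"
    using assms[of h s a] by (simp add: abs_mult mult_left_le)
  finally show "(occ rho Q pol h s a - occ rho Q' pol' h s a) * w h s a
      \<le> \<bar>occ rho Q pol h s a - occ rho Q' pol' h s a\<bar>" .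
qed

lemma val_diff_sgn:
  "(\<Sum>h=1..H. l1dist (occ rho Q pol h) (occ rho Q' pol' h)) =
   value_fn rho H Q pol (\<lambda>h s a. sgn (occ rho Q pol h s a - occ rho Q' pol' h s a))
   - value_fn rho H Q' pol' (\<lambda>h s a. sgn (occ rho Q pol h s a - occ rho Q' pol' h s a))"
  unfolding val_diff l1dist_def by (simp add: abs_sgn)

theorem proposition1:
  fixes M :: "'w measure"
    and rho :: "'s::finite pmf"
    and P :: "nat \<Rightarrow> 's \<Rightarrow> 'a::finite \<Rightarrow> 's pmf"
    and r :: "nat \<Rightarrow> 's \<Rightarrow> 'a \<Rightarrow> real"
    and H :: nat
    and piE :: "nat \<Rightarrow> 's \<Rightarrow> 'a pmf"
    and Phat :: "'w \<Rightarrow> nat \<Rightarrow> 's \<Rightarrow> 'a \<Rightarrow> 's pmf"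
    and dt :: "'w \<Rightarrow> nat \<Rightarrow> 's \<Rightarrow> 'a \<Rightarrow> real"
    and pibar :: "'w \<Rightarrow> nat \<Rightarrow> 's \<Rightarrow> 'a pmf"
    and eps_RFE eps_EST eps_opt delta_RFE delta_EST :: real
    and E_RFE E_EST :: "'w set"
  assumes "prob_space M"
    and r_range: "\<And>h s a. 0 \<le> r h s a \<and> r h s a \<le> 1"
    and expert_det: "deterministic_policy piE"
    and E_RFE_meas: "E_RFE \<in> sets M"
    and E_RFE_prob: "measure M E_RFE \<ge> 1 - delta_RFE"
    and RFE: "\<And>\<omega>. \<omega> \<in> E_RFE \<Longrightarrow>
        \<forall>w. (\<forall>h s a. \<bar>w h s a\<bar> \<le> 1) \<longrightarrow>
          (\<forall>pol. \<bar>value_fn rho H P pol w - value_fn rho H (Phat \<omega>) pol w\<bar> \<le> eps_RFE)"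
    and E_EST_meas: "E_EST \<in> sets M"
    and E_EST_prob: "measure M E_EST \<ge> 1 - delta_EST"
    and EST: "\<And>\<omega>. \<omega> \<in> E_EST \<Longrightarrow>
        (\<Sum>h=1..H. l1dist (dt \<omega> h) (occ rho P piE h)) \<le> eps_EST"
    and OPT: "\<And>\<omega>. \<omega> \<in> space M \<Longrightarrow>
        (\<Sum>h=1..H. l1dist (dt \<omega> h) (occ rho (Phat \<omega>) (pibar \<omega>) h))
          \<le> (INF pol. (\<Sum>h=1..H. l1dist (dt \<omega> h) (occ rho (Phat \<omega>) pol h))) + eps_opt"
  shows "\<exists>B\<in>sets M. measure M B \<ge> 1 - delta_EST - delta_RFE \<and>
           (\<forall>\<omega>\<in>B. value_fn rho H P piE r - value_fn rho H P (pibar \<omega>) r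
                    \<le> 2 * eps_EST + 2 * eps_RFE + eps_opt)"
proof (intro bexI conjI ballI)
  interpret prob_space M by fact
  show "E_RFE \<inter> E_EST \<in> sets M" using E_RFE_meas E_EST_meas by auto
  have "measure M (E_RFE \<union> E_EST) \<le> 1" by simp
  moreover have "measure M (E_RFE \<union> E_EST) = measure M E_RFE + measure M E_EST - measure M (E_RFE \<inter> E_EST)"
    using finite_measure_Diff' finite_measure_Union' E_RFE_meas E_EST_meas
    by (smt (verit, ccfv_threshold) Diff_Int2 Int_absorb Int_commute Un_Int_eq(3) Un_commute)
  ultimately show "measure M (E_RFE \<inter> E_EST) \<ge> 1 - delta_EST - delta_RFE"
    using E_RFE_prob E_EST_prob by linarith
next
  fix \<omega> assume \<omega>: "\<omega> \<in> E_RFE \<inter> E_EST"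
  have sp: "\<omega> \<in> space M" using \<omega> E_RFE_meas sets.sets_into_space by auto
  let ?D = "\<lambda>pol. (\<Sum>h=1..H. l1dist (dt \<omega> h) (occ rho (Phat \<omega>) pol h))"
  have bdd: "bdd_below (range ?D)"
    by (rule bdd_belowI[where m=0]) (auto intro: sum_nonneg l1_nonneg)
  have inf: "(INF pol. ?D pol) \<le> ?D piE" by (rule cINF_lower[OF bdd]) simp
  have opt: "?D (pibar \<omega>) \<le> ?D piE + eps_opt" using OPT[OF sp] inf by linarith
  have est: "(\<Sum>h=1..H. l1dist (dt \<omega> h) (occ rho P piE h)) \<le> eps_EST" using EST \<omega> by auto
  have rfe: "\<And>w pol. (\<And>h s a. \<bar>w h s a\<bar> \<le> 1) \<Longrightarrow>
      \<bar>value_fn rho H P pol w - value_fn rho H (Phat \<omega>) pol w\<bar> \<le> eps_RFE"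
    using RFE \<omega> by blast
  have e1: "(\<Sum>h=1..H. l1dist (occ rho P piE h) (occ rho (Phat \<omega>) piE h)) \<le> eps_RFE"
    unfolding val_diff_sgn
    by (rule order_trans[OF abs_ge_self rfe]) (simp add: abs_sgn_eq)
  have e2: "value_fn rho H (Phat \<omega>) (pibar \<omega>) r - value_fn rho H P (pibar \<omega>) r \<le> eps_RFE"
    using rfe[of r "pibar \<omega>"] r_range by (smt (verit))
  have e3: "value_fn rho H P piE r - value_fn rho H (Phat \<omega>) (pibar \<omega>) r
      \<le> (\<Sum>h=1..H. l1dist (occ rho P piE h) (occ rho (Phat \<omega>) (pibar \<omega>) h))"
    by (rule val_diff_le) (use r_range in \<open>smt (verit)\<close>)
  have t1: "(\<Sum>h=1..H. l1dist (occ rho P piE h) (occ rho (Phat \<omega>) (pibar \<omega>) h))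
     \<le> (\<Sum>h=1..H. l1dist (occ rho P piE h) (dt \<omega> h)) + ?D (pibar \<omega>)"
    by (rule sum_l1_tri)
  have t2: "?D piE \<le> (\<Sum>h=1..H. l1dist (dt \<omega> h) (occ rho P piE h))
       + (\<Sum>h=1..H. l1dist (occ rho P piE h) (occ rho (Phat \<omega>) piE h))"
    by (rule sum_l1_tri)
  have s: "(\<Sum>h=1..H. l1dist (occ rho P piE h) (dt \<omega> h)) = (\<Sum>h=1..H. l1dist (dt \<omega> h) (occ rho P piE h))"
    by (rule sum_l1_sym)
  show "value_fn rho H P piE r - value_fn rho H P (pibar \<omega>) r \<le> 2 * eps_EST + 2 * eps_RFE + eps_opt"
    using e1 e2 e3 t1 t2 s opt est by linarith
qed

end
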